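(* Let $G_1$ ($n\times k$) and $G_0$ ($n\times l$) be fixed binary matrices such that $\widetilde G=[G_1\ G_0]$ has full column rank $k+l$, let $r=n-k-l$, and let $\mathbf m\in\{0,1\}^k$ be fixed. On the binary defect and erasure channel with the encoding and decoding described in the context, $$P(\widehat{\mathbf m}\neq\mathbf m)\le\sum_{u=d_0}^{n}\beta^u(1-\beta)^{n-u}\sum_{w=d_0}^{u}B_{0,w}\binom{n-w}{u-w}+\sum_{e=d_1}^{n}\alpha^e(1-\alpha)^{n-e}\sum_{w=d_1}^{e}A_w\binom{n-w}{e-w}.$$ If in addition $B_{0,w}\le 2^{-l}\binom nw$ for all $d_0\le w\le n$ and $A_w\le 2^{-r}\binom nw$ for all $d_1\le w\le n$, then $$P(\widehat{\mathbf m}\neq\mathbf m)\le 2^{-l}(1+\beta)^n+2^{-r}(1+\alpha)^n.$$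
   Context: All arithmetic is over $\mathrm{GF}(2)$. $\mathcal C=\{\widetilde G\mathbf x:\mathbf x\in\{0,1\}^{k+l}\}$ is the $[n,k+l]$ code generated by $\widetilde G$, and $A_w$ is its number of codewords of Hamming weight $w$. $d_1$ is the minimum Hamming weight of $G_1\mathbf m'+G_0\mathbf d'$ over all $\mathbf m'\neq\mathbf 0$, $\mathbf d'\in\{0,1\}^l$. $\mathcal C_0^{\perp}=\{\mathbf x\in\{0,1\}^n: G_0^T\mathbf x=\mathbf 0\}$; $B_{0,w}$ is its number of vectors of weight $w$ and $d_0$ its minimum nonzero weight. Binary defect and erasure channel (BDEC) with parameters $(\beta,\alpha)$: each of the $n$ cells is independently defective with probability $\beta$; a defective cell is stuck at $0$ or $1$, each with probability $1/2$, independently. Writing codeword $\mathbf c$ stores $\mathbf c\circ\mathbf s$, where $(\mathbf c\circ\mathbf s)_i=s_i$ if cell $i$ is defective with stuck-at value $s_i$ and $=c_i$ otherwise. Then each of the $n$ stored bits is independently erased with probability $\alpha$ (independently of everything else); $\mathcal V$ is the set of unerased positions and the decoder observes $\mathcal V$ and $\mathbf y^{\mathcal V}=(\mathbf c\circ\mathbf s)^{\mathcal V}$. For a matrix/vector, superscript $\mathcal A$ denotes the rows indexed by the set $\mathcal A$. Encoding: with $\mathcal U$ the set of defects and $\mathbf b^{\mathcal U}=(G_1\mathbf m)^{\mathcal U}+\mathbf s^{\mathcal U}$, find $\mathbf d\in\{0,1\}^l$ with $G_0^{\mathcal U}\mathbf d=\mathbf b^{\mathcal U}$ and write $\mathbf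 c=G_1\mathbf m+G_0\mathbf d$; encoding failure ($E=0$) if no such $\mathbf d$ exists. Decoding: solve $\widetilde G^{\mathcal V}\binom{\widehat{\mathbf m}}{\widehat{\mathbf d}}=\mathbf y^{\mathcal V}$. The event $\{\widehat{\mathbf m}\neq\mathbf m\}$ (recovery failure) is declared if encoding fails, or if the solution set of this linear system contains vectors with different message parts $\widehat{\mathbf m}$. *)

theory Defs
  imports Complex_Main "HOL-Library.Z2"
begin

text \<open>A vector of length k is a function
  nat => bit vanishing outside {0..<k}; an n x k matrix is a function nat => nat => bit of
  which only entries i < n, j < k are used.\<close>

type_synonym bvec = "nat \<Rightarrow> bit"
type_synonym bmat = "nat \<Rightarrow> nat \<Rightarrow> bit"

definition vecs :: "nat \<Rightarrow> bvec set" where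
  "vecs k = {x. \<forall>i\<ge>k. x i = 0}"

text \<open>vectors supported on a set U (stuck-at values on the defect set)\<close>
definition vecs_on :: "nat set \<Rightarrow> bvec set" where
  "vecs_on U = {s. \<forall>i. i \<notin> U \<longrightarrow> s i = 0}"

definition mv :: "nat \<Rightarrow> nat \<Rightarrow> bmat \<Rightarrow> bvec \<Rightarrow> bvec" where
  "mv n m G x = (\<lambda>i. if i < n then (\<Sum>j<m. G i j * x j) else 0)"

definition hw :: "nat \<Rightarrow> bvec \<Rightarrow> nat" where
  "hw n c = card {i. i < n \<and> c i \<noteq> 0}"

definition catm :: "nat \<Rightarrow> bmat \<Rightarrow> bmat \<Rightarrow> bmat" where
  "catm k G1 G0 = (\<lambda>i j. if j < k then G1 i j else G0 i (j - k))"

definition code :: "nat \<Rightarrow> nat \<Rightarrow> nat \<Rightarrow> bmat \<Rightarrow> bmat \<Rightarrow> bvec set" where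
  "code n k l G1 G0 = mv n (k + l) (catm k G1 G0) ` vecs (k + l)"

definition A_w :: "nat \<Rightarrow> nat \<Rightarrow> nat \<Rightarrow> bmat \<Rightarrow> bmat \<Rightarrow> nat \<Rightarrow> nat" where
  "A_w n k l G1 G0 w = card {c \<in> code n k l G1 G0. hw n c = w}"

text \<open>d1 = min weight of G1 m' + G0 d' over m' nonzero; convention n+1 (i.e. infinity,
  making the corresponding sum empty) if there is no such m' (k = 0).\<close>
definition d1 :: "nat \<Rightarrow> nat \<Rightarrow> nat \<Rightarrow> bmat \<Rightarrow> bmat \<Rightarrow> nat" where
  "d1 n k l G1 G0 =
    (let D = {hw n (\<lambda>i. mv n k G1 m' i + mv n l G0 d' i) | m' d'.
                m' \<in> vecs k \<and> (\<exists>i. m' i \<noteq> 0) \<and> d' \<in> vecs l}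
     in if D = {} then n + 1 else Min D)"

definition dual0 :: "nat \<Rightarrow> nat \<Rightarrow> bmat \<Rightarrow> bvec set" where
  "dual0 n l G0 = {x \<in> vecs n. \<forall>j<l. (\<Sum>i<n. G0 i j * x i) = 0}"

definition B0_w :: "nat \<Rightarrow> nat \<Rightarrow> bmat \<Rightarrow> nat \<Rightarrow> nat" where
  "B0_w n l G0 w = card {x \<in> dual0 n l G0. hw n x = w}"

text \<open>minimum nonzero weight of C0^perp; convention n+1 (infinity) if C0^perp = {0}\<close>
definition d0 :: "nat \<Rightarrow> nat \<Rightarrow> bmat \<Rightarrow> nat" where
  "d0 n l G0 =
    (let D = {hw n x | x. x \<in> dual0 n l G0 \<and> (\<exists>i. x i \<noteq> 0)}
     in if D = {} then n + 1 else Min D)"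

definition enc_ok :: "nat \<Rightarrow> nat \<Rightarrow> nat \<Rightarrow> bmat \<Rightarrow> bmat \<Rightarrow> bvec \<Rightarrow> nat set \<Rightarrow> bvec \<Rightarrow> bvec \<Rightarrow> bool" where
  "enc_ok n k l G1 G0 m U s d \<longleftrightarrow>
     d \<in> vecs l \<and> (\<forall>i\<in>U. mv n l G0 d i = mv n k G1 m i + s i)"

definition stored :: "nat \<Rightarrow> nat \<Rightarrow> nat \<Rightarrow> bmat \<Rightarrow> bmat \<Rightarrow> bvec \<Rightarrow> nat set \<Rightarrow> bvec \<Rightarrow> bvec \<Rightarrow> bvec" where
  "stored n k l G1 G0 m U s d =
     (\<lambda>i. if i \<in> U then s i else mv n k G1 m i + mv n l G0 d i)"

definition dec_fail :: "nat \<Rightarrow> nat \<Rightarrow> nat \<Rightarrow> bmat \<Rightarrow> bmat \<Rightarrow> nat set \<Rightarrow> bvec \<Rightarrow> bool" where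
  "dec_fail n k l G1 G0 V y \<longleftrightarrow>
     (\<exists>x1 x2. x1 \<in> vecs (k + l) \<and> x2 \<in> vecs (k + l) \<and>
        (\<forall>i\<in>V. mv n (k + l) (catm k G1 G0) x1 i = y i) \<and>
        (\<forall>i\<in>V. mv n (k + l) (catm k G1 G0) x2 i = y i) \<and>
        (\<exists>j<k. x1 j \<noteq> x2 j))"

definition rec_fail :: "nat \<Rightarrow> nat \<Rightarrow> nat \<Rightarrow> bmat \<Rightarrow> bmat \<Rightarrow> bvec \<Rightarrow> nat set \<Rightarrow> bvec \<Rightarrow> nat set \<Rightarrow> bool" where
  "rec_fail n k l G1 G0 m U s V \<longleftrightarrow>
     (\<not> (\<exists>d. enc_ok n k l G1 G0 m U s d)) \<or>
     (\<exists>d. enc_ok n k l G1 G0 m U s d \<and> dec_fail n k l G1 G0 V (stored n k l G1 G0 m U s d))"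

text \<open>Probability of recovery failure on the BDEC(beta, alpha): sum over defect sets U,
  stuck values s on U (each pattern prob 2^-|U|), erasure sets E (V = complement).\<close>
definition P_fail :: "nat \<Rightarrow> nat \<Rightarrow> nat \<Rightarrow> bmat \<Rightarrow> bmat \<Rightarrow> bvec \<Rightarrow> real \<Rightarrow> real \<Rightarrow> real" where
  "P_fail n k l G1 G0 m \<beta> \<alpha> =
     (\<Sum>U\<in>Pow {..<n}. \<Sum>s\<in>vecs_on U. \<Sum>E\<in>Pow {..<n}.
        \<beta> ^ card U * (1 - \<beta>) ^ (n - card U) * (1/2) ^ card U *
        \<alpha> ^ card E * (1 - \<alpha>) ^ (n - card E) *
        (if rec_fail n k l G1 G0 m U s ({..<n} - E) then 1 else 0))"

end

theory Submission
  imports Defs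
begin


lemma count_super:
  assumes A: "finite A" and SA: "S \<subseteq> A" and Se: "card S \<le> e"
  shows "card {E. E \<subseteq> A \<and> S \<subseteq> E \<and> card E = e} = (card A - card S) choose (e - card S)"
proof -
  have fS: "finite S" using A SA finite_subset by blast
  have img: "{E. E \<subseteq> A \<and> S \<subseteq> E \<and> card E = e} = (\<lambda>F. F \<union> S) ` {F. F \<subseteq> A - S \<and> card F = e - card S}"
  proof (rule set_eqI, rule iffI)
    fix E assume "E \<in> {E. E \<subseteq> A \<and> S \<subseteq> E \<and> card E = e}"
    hence E: "E \<subseteq> A" "S \<subseteq> E" "card E = e" by auto
    have "card (E - S) = e - card S" using E fS by (simp add: card_Diff_subset)
    moreover have "E = (E - S) \<union> S" using E by auto
    ultimately show "E \<in> (\<lambda>F. F \<union> S) ` {F. F \<subseteq> A - S \<and> card F = e - card S}"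
      using E by blast
  next
    fix E assume "E \<in> (\<lambda>F. F \<union> S) ` {F. F \<subseteq> A - S \<and> card F = e - card S}"
    then obtain F where F: "F \<subseteq> A - S" "card F = e - card S" "E = F \<union> S" by auto
    have fF: "finite F" using F A finite_subset by blast
    have "F \<inter> S = {}" using F(1) by blast
    hence "card E = card F + card S" using F(3) card_Un_disjoint[OF fF fS] by simp
    hence "card E = e" using F Se by simp
    thus "E \<in> {E. E \<subseteq> A \<and> S \<subseteq> E \<and> card E = e}" using F SA by auto
  qed
  have inj: "inj_on (\<lambda>F. F \<union> S) {F. F \<subseteq> A - S \<and> card F = e - card S}"
    by (rule inj_onI) blast
  have "card {E. E \<subseteq> A \<and> S \<subseteq> E \<and> card E = e} = card {F. F \<subseteq> A - S \<and> card F = e - card S}"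
    unfolding img by (rule card_image[OF inj])
  also have "\<dots> = card (A - S) choose (e - card S)" using A by (simp add: n_subsets)
  also have "card (A - S) = card A - card S" using SA fS by (simp add: card_Diff_subset)
  finally show ?thesis .
qed

lemma sum_super:
  fixes f :: "nat \<Rightarrow> real"
  assumes S: "S \<subseteq> {..<n}"
  shows "(\<Sum>E\<in>Pow {..<n}. if S \<subseteq> E then f (card E) else 0)
       = (\<Sum>e=card S..n. f e * real ((n - card S) choose (e - card S)))"
proof -
  let ?P = "{E\<in>Pow {..<n}. S \<subseteq> E}"
  have "(\<Sum>E\<in>Pow {..<n}. if S \<subseteq> E then f (card E) else 0) = (\<Sum>E\<in>?P. f (card E))"
    using sum.inter_filter[of "Pow {..<n}" "\<lambda>E. f (card E)" "\<lambda>E. S \<subseteq> E"] by simp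
  also have "\<dots> = (\<Sum>e\<in>{card S..n}. \<Sum>E\<in>{E\<in>?P. card E = e}. f (card E))"
  proof (rule sum.group[symmetric])
    show "finite ?P" by simp
    show "finite {card S..n}" by simp
    show "card ` ?P \<subseteq> {card S..n}"
    proof
      fix x assume "x \<in> card ` ?P"
      then obtain E where E: "E \<subseteq> {..<n}" "S \<subseteq> E" "x = card E" by auto
      have "card S \<le> card E" using E finite_subset[OF E(1)] by (simp add: card_mono)
      moreover have "card E \<le> n" using card_mono[OF _ E(1)] by simp
      ultimately show "x \<in> {card S..n}" using E by simp
    qed
  qed
  also have "\<dots> = (\<Sum>e=card S..n. f e * real ((n - card S) choose (e - card S)))"
  proof (rule sum.cong[OF refl])
    fix e assume e: "e \<in> {card S..n}"
    have "(\<Sum>E\<in>{E\<in>?P. card E = e}. f (card E)) = (\<Sum>E\<in>{E\<in>?P. card E = e}. f e)"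
      by (rule sum.cong) auto
    also have "\<dots> = real (card {E\<in>?P. card E = e}) * f e" by simp
    also have "{E\<in>?P. card E = e} = {E. E \<subseteq> {..<n} \<and> S \<subseteq> E \<and> card E = e}" by auto
    also have "card \<dots> = (n - card S) choose (e - card S)"
      using count_super[of "{..<n}" S e] S e by simp
    finally show "(\<Sum>E\<in>{E\<in>?P. card E = e}. f (card E)) = f e * real ((n - card S) choose (e - card S))"
      by simp
  qed
  finally show ?thesis .
qed

lemma sum_all_weights:
  fixes p :: real
  shows "(\<Sum>E\<in>Pow {..<n}. p ^ card E * (1 - p) ^ (n - card E)) = 1"
proof -
  have "(\<Sum>E\<in>Pow {..<n}. p ^ card E * (1 - p) ^ (n - card E))
      = (\<Sum>E\<in>Pow {..<n}. if {} \<subseteq> E then p ^ card E * (1 - p) ^ (n - card E) else 0)" by simp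
  also have "\<dots> = (\<Sum>e=0..n. p ^ e * (1 - p) ^ (n - e) * real (n choose e))"
    using sum_super[of "{}" n "\<lambda>e. p ^ e * (1 - p) ^ (n - e)"] by simp
  also have "\<dots> = (p + (1 - p)) ^ n"
    unfolding binomial_ring atMost_atLeast0 by (rule sum.cong) (auto simp: mult_ac)
  finally show ?thesis by simp
qed

lemma tri_swap:
  fixes F :: "nat \<Rightarrow> nat \<Rightarrow> real"
  shows "(\<Sum>e=d..n. \<Sum>w=d..e. F w e) = (\<Sum>w=d..n. \<Sum>e=w..n. F w e)"
proof -
  have "(\<Sum>e=d..n. \<Sum>w=d..e. F w e) = (\<Sum>e=d..n. \<Sum>w=d..n. if w \<le> e then F w e else 0)"
  proof (rule sum.cong[OF refl])
    fix e assume e: "e \<in> {d..n}"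
    have "{w\<in>{d..n}. w \<le> e} = {d..e}" using e by auto
    thus "(\<Sum>w=d..e. F w e) = (\<Sum>w=d..n. if w \<le> e then F w e else 0)"
      using sum.inter_filter[of "{d..n}" "\<lambda>w. F w e" "\<lambda>w. w \<le> e"] by simp
  qed
  also have "\<dots> = (\<Sum>w=d..n. \<Sum>e=d..n. if w \<le> e then F w e else 0)" by (rule sum.swap)
  also have "\<dots> = (\<Sum>w=d..n. \<Sum>e=w..n. F w e)"
  proof (rule sum.cong[OF refl])
    fix w assume w: "w \<in> {d..n}"
    have "{e\<in>{d..n}. w \<le> e} = {w..n}" using w by auto
    thus "(\<Sum>e=d..n. if w \<le> e then F w e else 0) = (\<Sum>e=w..n. F w e)"
      using sum.inter_filter[of "{d..n}" "\<lambda>e. F w e" "\<lambda>e. w \<le> e"] by simp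
  qed
  finally show ?thesis .
qed

lemma gen_bound:
  fixes p :: real and C :: "bvec set"
  assumes fC: "finite C" and p0: "0 \<le> p" and p1: "p \<le> 1"
  shows "(\<Sum>E\<in>Pow {..<n}. p ^ card E * (1 - p) ^ (n - card E) *
            (if \<exists>c\<in>C. d \<le> hw n c \<and> (\<forall>i<n. i \<notin> E \<longrightarrow> c i = 0) then 1 else 0))
       \<le> (\<Sum>e=d..n. p ^ e * (1 - p) ^ (n - e) *
            (\<Sum>w=d..e. real (card {c\<in>C. hw n c = w}) * real ((n - w) choose (e - w))))"
proof -
  define wt where "wt e = p ^ e * (1 - p) ^ (n - e)" for e
  have wt0: "wt e \<ge> 0" for e using p0 p1 by (simp add: wt_def)
  define C' where "C' = {c\<in>C. d \<le> hw n c}"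
  have fC': "finite C'" using fC by (simp add: C'_def)
  define supp where "supp c = {i. i < n \<and> c i \<noteq> 0}" for c :: bvec
  have hw_supp: "hw n c = card (supp c)" for c by (simp add: hw_def supp_def)
  have supp_sub: "supp c \<subseteq> {..<n}" for c by (auto simp: supp_def)
  have cov: "(\<forall>i<n. i \<notin> E \<longrightarrow> c i = 0) \<longleftrightarrow> supp c \<subseteq> E" for E c
    by (auto simp: supp_def)
  have hw_le: "hw n c \<le> n" for c
    unfolding hw_supp using card_mono[OF _ supp_sub[of c]] by simp
  define g where "g w = (\<Sum>e=w..n. wt e * real ((n - w) choose (e - w)))" for w
  have ind: "(if \<exists>c\<in>C. d \<le> hw n c \<and> (\<forall>i<n. i \<notin> E \<longrightarrow> c i = 0) then 1 else 0)
        \<le> (\<Sum>c\<in>C'. if supp c \<subseteq> E then 1 else 0 :: real)" for E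
  proof (cases "\<exists>c\<in>C. d \<le> hw n c \<and> (\<forall>i<n. i \<notin> E \<longrightarrow> c i = 0)")
    case True
    then obtain c where c: "c \<in> C'" "supp c \<subseteq> E" using cov by (auto simp: C'_def)
    have "(if supp c \<subseteq> E then 1 else 0 :: real) \<le> (\<Sum>c\<in>C'. if supp c \<subseteq> E then 1 else 0 :: real)"
      by (rule member_le_sum[OF c(1) _ fC']) auto
    thus ?thesis using True c by simp
  next
    case False
    show ?thesis by (subst if_not_P[OF False]) (rule sum_nonneg, simp)
  qed
  have "(\<Sum>E\<in>Pow {..<n}. p ^ card E * (1 - p) ^ (n - card E) *
            (if \<exists>c\<in>C. d \<le> hw n c \<and> (\<forall>i<n. i \<notin> E \<longrightarrow> c i = 0) then 1 else 0))
      \<le> (\<Sum>E\<in>Pow {..<n}. wt (card E) * (\<Sum>c\<in>C'. if supp c \<subseteq> E then 1 else 0 :: real))"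
    by (rule sum_mono, unfold wt_def[symmetric], rule mult_left_mono[OF ind wt0])
  also have "\<dots> = (\<Sum>c\<in>C'. \<Sum>E\<in>Pow {..<n}. if supp c \<subseteq> E then wt (card E) else 0)"
    by (subst sum.swap) (simp add: sum_distrib_left if_distrib cong: if_cong)
  also have "\<dots> = (\<Sum>c\<in>C'. g (hw n c))"
    by (rule sum.cong[OF refl]) (simp add: sum_super[OF supp_sub] g_def hw_supp)
  also have "\<dots> = (\<Sum>w\<in>{d..n}. \<Sum>c\<in>{c\<in>C'. hw n c = w}. g (hw n c))"
    by (rule sum.group[symmetric]) (use fC' hw_le in \<open>auto simp: C'_def\<close>)
  also have "\<dots> = (\<Sum>w=d..n. real (card {c\<in>C. hw n c = w}) * g w)"
  proof (rule sum.cong[OF refl])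
    fix w assume w: "w \<in> {d..n}"
    have "{c\<in>C'. hw n c = w} = {c\<in>C. hw n c = w}" using w by (auto simp: C'_def)
    thus "(\<Sum>c\<in>{c\<in>C'. hw n c = w}. g (hw n c)) = real (card {c\<in>C. hw n c = w}) * g w"
      by simp
  qed
  also have "\<dots> = (\<Sum>w=d..n. \<Sum>e=w..n. wt e * (real (card {c\<in>C. hw n c = w}) * real ((n - w) choose (e - w))))"
    by (simp add: g_def sum_distrib_left mult_ac)
  also have "\<dots> = (\<Sum>e=d..n. \<Sum>w=d..e. wt e * (real (card {c\<in>C. hw n c = w}) * real ((n - w) choose (e - w))))"
    by (rule tri_swap[symmetric])
  also have "\<dots> = (\<Sum>e=d..n. p ^ e * (1 - p) ^ (n - e) *
            (\<Sum>w=d..e. real (card {c\<in>C. hw n c = w}) * real ((n - w) choose (e - w))))"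
    by (simp add: wt_def sum_distrib_left)
  finally show ?thesis .
qed

lemma inner_id:
  assumes "e \<le> n"
  shows "(\<Sum>w=0..e. real (n choose w) * real ((n - w) choose (e - w))) = real (n choose e) * 2 ^ e"
proof -
  have "(\<Sum>w=0..e. real (n choose w) * real ((n - w) choose (e - w)))
      = (\<Sum>w=0..e. real (n choose e) * real (e choose w))"
  proof (rule sum.cong[OF refl])
    fix w assume "w \<in> {0..e}"
    hence "(n choose e) * (e choose w) = (n choose w) * ((n - w) choose (e - w))"
      using assms by (intro choose_mult) auto
    thus "real (n choose w) * real ((n - w) choose (e - w)) = real (n choose e) * real (e choose w)"
      by (metis of_nat_mult)
  qed
  also have "\<dots> = real (n choose e) * real (\<Sum>w\<le>e. e choose w)"
    by (simp add: sum_distrib_left atMost_atLeast0)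
  also have "\<dots> = real (n choose e) * 2 ^ e" by (simp add: choose_row_sum)
  finally show ?thesis .
qed

lemma part2:
  fixes p c :: real and A :: "nat \<Rightarrow> nat"
  assumes p0: "0 \<le> p" and p1: "p \<le> 1" and c0: "0 \<le> c"
    and hA: "\<forall>w. d \<le> w \<and> w \<le> n \<longrightarrow> real (A w) \<le> c * real (n choose w)"
  shows "(\<Sum>e=d..n. p ^ e * (1 - p) ^ (n - e) * (\<Sum>w=d..e. real (A w) * real ((n - w) choose (e - w))))
       \<le> c * (1 + p) ^ n"
proof -
  have wt0: "0 \<le> p ^ e * (1 - p) ^ (n - e)" for e using p0 p1 by simp
  have "(\<Sum>e=d..n. p ^ e * (1 - p) ^ (n - e) * (\<Sum>w=d..e. real (A w) * real ((n - w) choose (e - w))))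
      \<le> (\<Sum>e=d..n. p ^ e * (1 - p) ^ (n - e) * (c * (\<Sum>w=0..e. real (n choose w) * real ((n - w) choose (e - w)))))"
  proof (rule sum_mono, rule mult_left_mono[OF _ wt0])
    fix e assume e: "e \<in> {d..n}"
    have "(\<Sum>w=d..e. real (A w) * real ((n - w) choose (e - w)))
        \<le> (\<Sum>w=d..e. c * real (n choose w) * real ((n - w) choose (e - w)))"
      by (rule sum_mono, rule mult_right_mono) (use hA e in auto)
    also have "\<dots> \<le> (\<Sum>w=0..e. c * real (n choose w) * real ((n - w) choose (e - w)))"
      by (rule sum_mono2) (use c0 in auto)
    finally show "(\<Sum>w=d..e. real (A w) * real ((n - w) choose (e - w)))
        \<le> c * (\<Sum>w=0..e. real (n choose w) * real ((n - w) choose (e - w)))"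
      by (simp add: sum_distrib_left mult_ac)
  qed
  also have "\<dots> \<le> (\<Sum>e=0..n. p ^ e * (1 - p) ^ (n - e) * (c * (\<Sum>w=0..e. real (n choose w) * real ((n - w) choose (e - w)))))"
    by (rule sum_mono2) (use p0 p1 c0 in \<open>auto intro!: mult_nonneg_nonneg sum_nonneg\<close>)
  also have "\<dots> = (\<Sum>e=0..n. p ^ e * (1 - p) ^ (n - e) * (c * (real (n choose e) * 2 ^ e)))"
    by (rule sum.cong[OF refl]) (simp add: inner_id)
  also have "\<dots> = c * (\<Sum>e\<le>n. of_nat (n choose e) * (2 * p) ^ e * (1 - p) ^ (n - e))"
    by (simp add: sum_distrib_left atMost_atLeast0 power_mult_distrib mult_ac)
  also have "\<dots> = c * (2 * p + (1 - p)) ^ n" by (simp only: binomial_ring)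
  also have "\<dots> = c * (1 + p) ^ n" by (simp add: add.commute)
  finally show ?thesis .
qed



declare add_bit_eq_xor[simp del] mult_bit_eq_and[simp del]

lemma bit_add_self[simp]: "(a::bit) + a = 0"
  by (cases a) (simp_all add: add_bit_eq_xor)

lemma bit_eq_add: "((a::bit) + c = b) \<longleftrightarrow> (a = b + c)"
  by (cases a; cases b; cases c) (simp_all add: add_bit_eq_xor)

lemma solv:
  fixes R :: "nat \<Rightarrow> nat \<Rightarrow> bit"
  assumes "finite U"
  shows "(\<exists>x. (\<exists>i\<in>U. x i \<noteq> 0) \<and> (\<forall>j<l. (\<Sum>i\<in>U. x i * R i j) = 0))
       \<or> (\<forall>b. \<exists>d. \<forall>i\<in>U. (\<Sum>j<l. R i j * d j) = b i)"
  using assms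
proof (induction l arbitrary: U R)
  case 0
  show ?case
  proof (cases "U = {}")
    case True thus ?thesis by simp
  next
    case False
    then obtain i where "i \<in> U" by blast
    thus ?thesis by (intro disjI1 exI[of _ "\<lambda>_. 1"]) auto
  qed
next
  case (Suc l)
  show ?case
  proof (cases "\<forall>i\<in>U. R i l = 0")
    case True
    from Suc.IH[OF Suc.prems, of R] show ?thesis
    proof
      assume "\<exists>x. (\<exists>i\<in>U. x i \<noteq> 0) \<and> (\<forall>j<l. (\<Sum>i\<in>U. x i * R i j) = 0)"
      then obtain x where x: "\<exists>i\<in>U. x i \<noteq> 0" "\<forall>j<l. (\<Sum>i\<in>U. x i * R i j) = 0" by blast
      have "\<forall>j<Suc l. (\<Sum>i\<in>U. x i * R i j) = 0"
      proof (intro allI impI)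
        fix j assume "j < Suc l"
        hence "j < l \<or> j = l" by auto
        thus "(\<Sum>i\<in>U. x i * R i j) = 0" using x(2) True by auto
      qed
      thus ?thesis using x(1) by blast
    next
      assume H: "\<forall>b. \<exists>d. \<forall>i\<in>U. (\<Sum>j<l. R i j * d j) = b i"
      have "\<forall>b. \<exists>d. \<forall>i\<in>U. (\<Sum>j<Suc l. R i j * d j) = b i"
      proof
        fix b
        obtain d where d: "\<forall>i\<in>U. (\<Sum>j<l. R i j * d j) = b i" using H by blast
        have "\<forall>i\<in>U. (\<Sum>j<Suc l. R i j * d j) = b i" using d True by simp
        thus "\<exists>d. \<forall>i\<in>U. (\<Sum>j<Suc l. R i j * d j) = b i" by blast
      qed
      thus ?thesis by blast
    qed
  next
    case False
    then obtain p where p: "p \<in> U" "R p l = 1" by auto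
    define R' where "R' i j = R i j + R i l * R p j" for i j
    define U' where "U' = U - {p}"
    have fU': "finite U'" using Suc.prems by (simp add: U'_def)
    have Usplit: "(\<Sum>i\<in>U. f i) = f p + (\<Sum>i\<in>U'. f i)" for f :: "nat \<Rightarrow> bit"
      unfolding U'_def using Suc.prems p(1) by (simp add: sum.remove)
    from Suc.IH[OF fU', of R'] show ?thesis
    proof
      assume "\<exists>x. (\<exists>i\<in>U'. x i \<noteq> 0) \<and> (\<forall>j<l. (\<Sum>i\<in>U'. x i * R' i j) = 0)"
      then obtain x' where x': "\<exists>i\<in>U'. x' i \<noteq> 0" "\<forall>j<l. (\<Sum>i\<in>U'. x' i * R' i j) = 0" by blast
      define s where "s = (\<Sum>i\<in>U'. x' i * R i l)"
      define x where "x = x'(p := s)"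
      have xU': "x i = x' i" if "i \<in> U'" for i using that by (simp add: x_def U'_def)
      have tot: "(\<Sum>i\<in>U. x i * R i j) = s * R p j + (\<Sum>i\<in>U'. x' i * R i j)" for j
      proof -
        have "(\<Sum>i\<in>U'. x i * R i j) = (\<Sum>i\<in>U'. x' i * R i j)"
          by (rule sum.cong) (simp_all add: xU')
        moreover have "x p = s" by (simp add: x_def)
        ultimately show ?thesis unfolding Usplit by simp
      qed
      have "\<forall>j<Suc l. (\<Sum>i\<in>U. x i * R i j) = 0"
      proof (intro allI impI)
        fix j assume "j < Suc l"
        hence "j < l \<or> j = l" by auto
        thus "(\<Sum>i\<in>U. x i * R i j) = 0"
        proof
          assume "j = l" thus ?thesis using tot p(2) by (simp add: s_def)
        next
          assume j: "j < l"
          have "(\<Sum>i\<in>U'. x' i * R' i j) = (\<Sum>i\<in>U'. x' i * R i j) + s * R p j"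
            by (simp add: R'_def s_def distrib_left sum.distrib sum_distrib_left mult.commute mult.left_commute)
          hence "(\<Sum>i\<in>U'. x' i * R i j) + s * R p j = 0" using x'(2) j by simp
          hence "(\<Sum>i\<in>U'. x' i * R i j) = s * R p j" unfolding bit_eq_add by simp
          thus ?thesis using tot by simp
        qed
      qed
      moreover have "\<exists>i\<in>U. x i \<noteq> 0"
      proof -
        obtain i where i: "i \<in> U'" "x' i \<noteq> 0" using x'(1) by blast
        hence "x i \<noteq> 0" using xU' by simp
        thus ?thesis using i(1) by (auto simp: U'_def)
      qed
      ultimately show ?thesis by blast
    next
      assume H: "\<forall>b. \<exists>d. \<forall>i\<in>U'. (\<Sum>j<l. R' i j * d j) = b i"
      have "\<forall>b. \<exists>d. \<forall>i\<in>U. (\<Sum>j<Suc l. R i j * d j) = b i"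
      proof
        fix b
        obtain d' where d': "\<forall>i\<in>U'. (\<Sum>j<l. R' i j * d' j) = b i + R i l * b p"
          using spec[OF H, of "\<lambda>i. b i + R i l * b p"] by auto
        define t where "t = b p + (\<Sum>j<l. R p j * d' j)"
        define d where "d = d'(l := t)"
        have dsum: "(\<Sum>j<Suc l. R i j * d j) = (\<Sum>j<l. R i j * d' j) + R i l * t" for i
        proof -
          have "(\<Sum>j<l. R i j * d j) = (\<Sum>j<l. R i j * d' j)" by (rule sum.cong) (auto simp: d_def)
          moreover have "d l = t" by (simp add: d_def)
          ultimately show ?thesis by simp
        qed
        have exp: "(\<Sum>j<l. R' i j * d' j) = (\<Sum>j<l. R i j * d' j) + R i l * (\<Sum>j<l. R p j * d' j)" for i
          by (simp add: R'_def distrib_left distrib_right sum.distrib sum_distrib_left mult.commute mult.left_commute)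
        have "\<forall>i\<in>U. (\<Sum>j<Suc l. R i j * d j) = b i"
        proof
          fix i assume i: "i \<in> U"
          show "(\<Sum>j<Suc l. R i j * d j) = b i"
          proof (cases "i = p")
            case True
            have hp: "(\<Sum>j<l. R p j * d' j) + (b p + (\<Sum>j<l. R p j * d' j)) = b p"
              by (simp add: add.left_commute)
            show ?thesis unfolding True dsum t_def p(2) mult_1_left by (rule hp)
          next
            case False
            hence "i \<in> U'" using i by (simp add: U'_def)
            hence eq: "(\<Sum>j<l. R i j * d' j) + R i l * (\<Sum>j<l. R p j * d' j) = b i + R i l * b p"
              using d' exp[of i] by simp
            have eq2: "(\<Sum>j<l. R i j * d' j) = b i + (R i l * b p + R i l * (\<Sum>j<l. R p j * d' j))"
              using eq unfolding bit_eq_add by (simp add: add.assoc)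
            show ?thesis unfolding dsum t_def
              by (subst bit_eq_add) (simp add: eq2 distrib_left)
          qed
        qed
        thus "\<exists>d. \<forall>i\<in>U. (\<Sum>j<Suc l. R i j * d j) = b i" by blast
      qed
      thus ?thesis by blast
    qed
  qed
qed



lemma vecs_on_fin:
  assumes "finite U"
  shows "finite (vecs_on U) \<and> card (vecs_on U) \<le> 2 ^ card U"
proof -
  define \<phi> where "\<phi> F = (\<lambda>i. if i \<in> F then 1 else 0 :: bit)" for F :: "nat set"
  have sub: "vecs_on U \<subseteq> \<phi> ` Pow U"
  proof
    fix s assume s: "s \<in> vecs_on U"
    have "s = \<phi> {i\<in>U. s i = 1}"
    proof
      fix i show "s i = \<phi> {i \<in> U. s i = 1} i"
        using s by (cases "s i = 0") (auto simp: \<phi>_def vecs_on_def)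
    qed
    thus "s \<in> \<phi> ` Pow U" by blast
  qed
  have fin: "finite (\<phi> ` Pow U)" using assms by simp
  have "card (vecs_on U) \<le> card (\<phi> ` Pow U)" by (rule card_mono[OF fin sub])
  also have "\<dots> \<le> card (Pow U)" by (rule card_image_le) (simp add: assms)
  also have "\<dots> = 2 ^ card U" using assms by (simp add: card_Pow)
  finally show ?thesis using finite_subset[OF sub fin] by simp
qed

lemma vecs_eq: "vecs n = vecs_on {..<n}"
  by (auto simp: vecs_def vecs_on_def)

lemma finite_vecs: "finite (vecs n)"
  using vecs_on_fin[of "{..<n}"] by (simp add: vecs_eq)

lemma code_sub: "code n k l G1 G0 \<subseteq> vecs n"
  by (auto simp: code_def vecs_def mv_def)

lemma finite_code: "finite (code n k l G1 G0)"
  using finite_subset[OF code_sub finite_vecs] .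

lemma finite_dual0: "finite (dual0 n l G0)"
  using finite_subset[OF _ finite_vecs[of n]] by (auto simp: dual0_def)

lemma hw_le: "hw n c \<le> n"
proof -
  have "{i. i < n \<and> c i \<noteq> 0} \<subseteq> {..<n}" by auto
  from card_mono[OF _ this] show ?thesis by (simp add: hw_def)
qed

lemma sum_split_add:
  fixes f :: "nat \<Rightarrow> 'a::comm_monoid_add"
  shows "(\<Sum>j<k + l. f j) = (\<Sum>j<k. f j) + (\<Sum>j<l. f (j + k))"
  by (induction l) (simp_all add: add_ac)

lemma enc_ok_exists:
  assumes U: "U \<subseteq> {..<n}"
    and nb: "\<not> (\<exists>c\<in>dual0 n l G0. d0 n l G0 \<le> hw n c \<and> (\<forall>i<n. i \<notin> U \<longrightarrow> c i = 0))"
  shows "\<exists>d. enc_ok n k l G1 G0 m U s d"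
proof -
  have fU: "finite U" using U finite_subset by blast
  from solv[OF fU, of l G0] show ?thesis
  proof
    assume "\<exists>x. (\<exists>i\<in>U. x i \<noteq> 0) \<and> (\<forall>j<l. (\<Sum>i\<in>U. x i * G0 i j) = 0)"
    then obtain x where x: "\<exists>i\<in>U. x i \<noteq> 0" "\<forall>j<l. (\<Sum>i\<in>U. x i * G0 i j) = 0" by blast
    define x' where "x' i = (if i \<in> U then x i else 0)" for i
    have "x' \<in> dual0 n l G0"
    proof -
      have "x' \<in> vecs n" using U by (auto simp: x'_def vecs_def)
      moreover have "(\<Sum>i<n. G0 i j * x' i) = 0" if j: "j < l" for j
      proof -
        have "(\<Sum>i<n. G0 i j * x' i) = (\<Sum>i\<in>{..<n}. if i \<in> U then x i * G0 i j else 0)"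
          by (rule sum.cong) (auto simp: x'_def mult.commute)
        also have "\<dots> = (\<Sum>i\<in>{i\<in>{..<n}. i \<in> U}. x i * G0 i j)"
          by (rule sum.inter_filter[symmetric]) simp
        also have "{i\<in>{..<n}. i \<in> U} = U" using U by auto
        finally show ?thesis using x(2) j by simp
      qed
      ultimately show ?thesis by (simp add: dual0_def)
    qed
    moreover have "\<exists>i. x' i \<noteq> 0" using x(1) by (auto simp: x'_def)
    moreover have "d0 n l G0 \<le> hw n x'" if "x' \<in> dual0 n l G0" "\<exists>i. x' i \<noteq> 0"
    proof -
      let ?D = "{hw n x | x. x \<in> dual0 n l G0 \<and> (\<exists>i. x i \<noteq> 0)}"
      have mem: "hw n x' \<in> ?D" using that by blast
      have fD: "finite ?D" by (rule finite_subset[of _ "{..n}"]) (auto simp: hw_le)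
      have "d0 n l G0 = Min ?D" using mem unfolding d0_def Let_def by auto
      thus ?thesis using Min_le[OF fD mem] by simp
    qed
    moreover have "\<forall>i<n. i \<notin> U \<longrightarrow> x' i = 0" by (simp add: x'_def)
    ultimately have False using nb by blast
    thus ?thesis ..
  next
    assume H: "\<forall>b. \<exists>d. \<forall>i\<in>U. (\<Sum>j<l. G0 i j * d j) = b i"
    obtain d where d: "\<forall>i\<in>U. (\<Sum>j<l. G0 i j * d j) = mv n k G1 m i + s i"
      using spec[OF H, of "\<lambda>i. mv n k G1 m i + s i"] by auto
    define d' where "d' j = (if j < l then d j else 0)" for j
    have "d' \<in> vecs l" by (simp add: d'_def vecs_def)
    moreover have "\<forall>i\<in>U. mv n l G0 d' i = mv n k G1 m i + s i"
    proof
      fix i assume i: "i \<in> U"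
      hence "i < n" using U by auto
      have "(\<Sum>j<l. G0 i j * d' j) = (\<Sum>j<l. G0 i j * d j)"
        by (rule sum.cong) (auto simp: d'_def)
      hence "mv n l G0 d' i = (\<Sum>j<l. G0 i j * d j)"
        using \<open>i < n\<close> by (simp add: mv_def)
      thus "mv n l G0 d' i = mv n k G1 m i + s i" using d i by simp
    qed
    ultimately show ?thesis unfolding enc_ok_def by blast
  qed
qed

lemma mv_add: "mv n q G (\<lambda>j. a j + b j) i = mv n q G a i + mv n q G b i"
  by (simp add: mv_def distrib_left sum.distrib)

lemma dec_bad:
  assumes "dec_fail n k l G1 G0 ({..<n} - E) y"
  shows "\<exists>c\<in>code n k l G1 G0. d1 n k l G1 G0 \<le> hw n c \<and> (\<forall>i<n. i \<notin> E \<longrightarrow> c i = 0)"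
proof -
  obtain x1 x2 where x: "x1 \<in> vecs (k + l)" "x2 \<in> vecs (k + l)"
    "\<forall>i\<in>{..<n} - E. mv n (k + l) (catm k G1 G0) x1 i = y i"
    "\<forall>i\<in>{..<n} - E. mv n (k + l) (catm k G1 G0) x2 i = y i"
    and j0: "\<exists>j<k. x1 j \<noteq> x2 j"
    using assms unfolding dec_fail_def by blast
  define x where "x j = x1 j + x2 j" for j
  define c where "c = mv n (k + l) (catm k G1 G0) x"
  have xv: "x \<in> vecs (k + l)" using x(1,2) by (simp add: vecs_def x_def)
  have cc: "c \<in> code n k l G1 G0" using xv by (simp add: code_def c_def)
  have cz: "\<forall>i<n. i \<notin> E \<longrightarrow> c i = 0"
  proof (intro allI impI)
    fix i assume "i < n" "i \<notin> E"
    hence "i \<in> {..<n} - E" by simp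
    hence "c i = y i + y i" using x(3,4) unfolding c_def x_def mv_add by simp
    thus "c i = 0" by simp
  qed
  define m' where "m' j = (if j < k then x j else 0)" for j
  define d' where "d' j = (if j < l then x (j + k) else 0)" for j
  have m'v: "m' \<in> vecs k" by (simp add: m'_def vecs_def)
  have d'v: "d' \<in> vecs l" by (simp add: d'_def vecs_def)
  have m'nz: "\<exists>i. m' i \<noteq> 0"
  proof -
    obtain j where j: "j < k" "x1 j \<noteq> x2 j" using j0 by blast
    have "x j \<noteq> 0" using j(2) unfolding x_def bit_eq_add by simp
    thus ?thesis using j(1) by (auto simp: m'_def)
  qed
  have ceq: "c = (\<lambda>i. mv n k G1 m' i + mv n l G0 d' i)"
  proof
    fix i
    show "c i = mv n k G1 m' i + mv n l G0 d' i"
    proof (cases "i < n")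
      case True
      have "c i = (\<Sum>j<k + l. catm k G1 G0 i j * x j)" using True by (simp add: c_def mv_def)
      also have "\<dots> = (\<Sum>j<k. catm k G1 G0 i j * x j) + (\<Sum>j<l. catm k G1 G0 i (j + k) * x (j + k))"
        by (rule sum_split_add)
      also have "(\<Sum>j<k. catm k G1 G0 i j * x j) = mv n k G1 m' i"
        using True by (simp add: mv_def catm_def m'_def)
      also have "(\<Sum>j<l. catm k G1 G0 i (j + k) * x (j + k)) = mv n l G0 d' i"
        using True by (simp add: mv_def catm_def d'_def)
      finally show ?thesis .
    qed (simp add: c_def mv_def)
  qed
  let ?D = "{hw n (\<lambda>i. mv n k G1 m' i + mv n l G0 d' i) | m' d'.
                m' \<in> vecs k \<and> (\<exists>i. m' i \<noteq> 0) \<and> d' \<in> vecs l}"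
  have mem: "hw n c \<in> ?D" unfolding ceq using m'v d'v m'nz by blast
  have fD: "finite ?D" by (rule finite_subset[of _ "{..n}"]) (auto simp: hw_le)
  have ne: "?D \<noteq> {}" using mem by blast
  have "d1 n k l G1 G0 = Min ?D" unfolding d1_def Let_def by (rule if_not_P[OF ne])
  hence "d1 n k l G1 G0 \<le> hw n c" using Min_le[OF fD mem] by simp
  thus ?thesis using cc cz by blast
qed

lemma ind_bound:
  assumes U: "U \<subseteq> {..<n}"
  shows "(if rec_fail n k l G1 G0 m U s ({..<n} - E) then 1 else 0 :: real)
     \<le> (if \<exists>c\<in>dual0 n l G0. d0 n l G0 \<le> hw n c \<and> (\<forall>i<n. i \<notin> U \<longrightarrow> c i = 0) then 1 else 0)
      + (if \<exists>c\<in>code n k l G1 G0. d1 n k l G1 G0 \<le> hw n c \<and> (\<forall>i<n. i \<notin> E \<longrightarrow> c i = 0) then 1 else 0)"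
proof (cases "rec_fail n k l G1 G0 m U s ({..<n} - E)")
  case True
  have "(\<exists>c\<in>dual0 n l G0. d0 n l G0 \<le> hw n c \<and> (\<forall>i<n. i \<notin> U \<longrightarrow> c i = 0))
     \<or> (\<exists>c\<in>code n k l G1 G0. d1 n k l G1 G0 \<le> hw n c \<and> (\<forall>i<n. i \<notin> E \<longrightarrow> c i = 0))"
    using True enc_ok_exists[OF U, of l G0 k G1 m s] dec_bad unfolding rec_fail_def by blast
  thus ?thesis by auto
qed simp



theorem theorem4:
  fixes n k l :: nat and G1 G0 :: bmat and m :: bvec and \<beta> \<alpha> :: real
  assumes rank: "inj_on (mv n (k + l) (catm k G1 G0)) (vecs (k + l))"
    and msg: "m \<in> vecs k"
    and beta: "0 \<le> \<beta>" "\<beta> \<le> 1"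
    and alpha: "0 \<le> \<alpha>" "\<alpha> \<le> 1"
  shows "(P_fail n k l G1 G0 m \<beta> \<alpha> \<le>
           (\<Sum>u = d0 n l G0..n. \<beta> ^ u * (1 - \<beta>) ^ (n - u) *
              (\<Sum>w = d0 n l G0..u. real (B0_w n l G0 w) * real ((n - w) choose (u - w))))
         + (\<Sum>e = d1 n k l G1 G0..n. \<alpha> ^ e * (1 - \<alpha>) ^ (n - e) *
              (\<Sum>w = d1 n k l G1 G0..e. real (A_w n k l G1 G0 w) * real ((n - w) choose (e - w)))))
       \<and> ((\<forall>w. d0 n l G0 \<le> w \<and> w \<le> n \<longrightarrow> real (B0_w n l G0 w) \<le> (1/2) ^ l * real (n choose w)) \<and>
         (\<forall>w. d1 n k l G1 G0 \<le> w \<and> w \<le> n \<longrightarrow>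
              real (A_w n k l G1 G0 w) \<le> (1/2) ^ (n - k - l) * real (n choose w))
         \<longrightarrow> P_fail n k l G1 G0 m \<beta> \<alpha> \<le> (1/2) ^ l * (1 + \<beta>) ^ n + (1/2) ^ (n - k - l) * (1 + \<alpha>) ^ n)"
proof -
  define i0 where "i0 U = (if \<exists>c\<in>dual0 n l G0. d0 n l G0 \<le> hw n c \<and> (\<forall>i<n. i \<notin> U \<longrightarrow> c i = 0) then 1 else 0 :: real)" for U
  define i1 where "i1 E = (if \<exists>c\<in>code n k l G1 G0. d1 n k l G1 G0 \<le> hw n c \<and> (\<forall>i<n. i \<notin> E \<longrightarrow> c i = 0) then 1 else 0 :: real)" for E
  define BU where "BU U = \<beta> ^ card U * (1 - \<beta>) ^ (n - card U)" for U :: "nat set"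
  define W where "W E = \<alpha> ^ card E * (1 - \<alpha>) ^ (n - card E)" for E :: "nat set"
  define A where "A U = BU U * (1/2) ^ card U" for U
  define X where "X = (\<Sum>E\<in>Pow {..<n}. W E * i1 E)"
  have BU0: "BU U \<ge> 0" for U using beta by (simp add: BU_def)
  have W0: "W E \<ge> 0" for E using alpha by (simp add: W_def)
  have A0: "A U \<ge> 0" for U using BU0 by (simp add: A_def)
  have i00: "i0 U \<ge> 0" for U by (simp add: i0_def)
  have i10: "i1 E \<ge> 0" for E by (simp add: i1_def)
  have X0: "X \<ge> 0" unfolding X_def by (intro sum_nonneg mult_nonneg_nonneg W0 i10)
  have sW: "(\<Sum>E\<in>Pow {..<n}. W E) = 1" unfolding W_def by (rule sum_all_weights)
  have sBU: "(\<Sum>U\<in>Pow {..<n}. BU U) = 1" unfolding BU_def by (rule sum_all_weights)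
  have "P_fail n k l G1 G0 m \<beta> \<alpha> = (\<Sum>U\<in>Pow {..<n}. \<Sum>s\<in>vecs_on U. \<Sum>E\<in>Pow {..<n}.
        A U * W E * (if rec_fail n k l G1 G0 m U s ({..<n} - E) then 1 else 0))"
    by (simp add: P_fail_def A_def BU_def W_def mult.assoc)
  also have "\<dots> \<le> (\<Sum>U\<in>Pow {..<n}. \<Sum>s\<in>vecs_on U. \<Sum>E\<in>Pow {..<n}. A U * W E * (i0 U + i1 E))"
  proof (intro sum_mono mult_left_mono mult_nonneg_nonneg A0 W0)
    fix U E s assume "U \<in> Pow {..<n}"
    thus "(if rec_fail n k l G1 G0 m U s ({..<n} - E) then 1 else 0) \<le> i0 U + i1 E"
      unfolding i0_def i1_def by (intro ind_bound) auto
  qed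
  also have "\<dots> = (\<Sum>U\<in>Pow {..<n}. \<Sum>s\<in>vecs_on U. A U * i0 U + A U * X)"
  proof (intro sum.cong refl)
    fix U s
    have "(\<Sum>E\<in>Pow {..<n}. A U * W E * (i0 U + i1 E))
        = A U * i0 U * (\<Sum>E\<in>Pow {..<n}. W E) + A U * X"
      by (simp add: X_def distrib_left sum.distrib sum_distrib_left mult_ac)
    thus "(\<Sum>E\<in>Pow {..<n}. A U * W E * (i0 U + i1 E)) = A U * i0 U + A U * X"
      using sW by simp
  qed
  also have "\<dots> = (\<Sum>U\<in>Pow {..<n}. real (card (vecs_on U)) * A U * (i0 U + X))"
    by (rule sum.cong[OF refl]) (simp add: algebra_simps)
  also have "\<dots> \<le> (\<Sum>U\<in>Pow {..<n}. BU U * (i0 U + X))"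
  proof (rule sum_mono)
    fix U assume "U \<in> Pow {..<n}"
    hence fU: "finite U" using finite_subset by auto
    have "real (card (vecs_on U)) * (1/2) ^ card U \<le> 2 ^ card U * (1/2) ^ card U"
      using vecs_on_fin[OF fU] by (intro mult_right_mono) (simp_all add: of_nat_le_iff[symmetric])
    also have "\<dots> = 1" by (simp add: power_mult_distrib[symmetric])
    finally have c1: "real (card (vecs_on U)) * (1/2) ^ card U \<le> 1" .
    have "real (card (vecs_on U)) * A U * (i0 U + X) = (real (card (vecs_on U)) * (1/2) ^ card U) * (BU U * (i0 U + X))"
      by (simp add: A_def mult_ac)
    also have "\<dots> \<le> 1 * (BU U * (i0 U + X))"
      by (rule mult_right_mono[OF c1]) (intro mult_nonneg_nonneg add_nonneg_nonneg BU0 i00 X0)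
    finally show "real (card (vecs_on U)) * A U * (i0 U + X) \<le> BU U * (i0 U + X)" by simp
  qed
  also have "\<dots> = (\<Sum>U\<in>Pow {..<n}. BU U * i0 U) + X"
    using sBU by (simp add: distrib_left sum.distrib sum_distrib_right[symmetric])
  finally have P1: "P_fail n k l G1 G0 m \<beta> \<alpha> \<le> (\<Sum>U\<in>Pow {..<n}. BU U * i0 U) + X" .
  have g0: "(\<Sum>U\<in>Pow {..<n}. BU U * i0 U) \<le>
           (\<Sum>u = d0 n l G0..n. \<beta> ^ u * (1 - \<beta>) ^ (n - u) *
              (\<Sum>w = d0 n l G0..u. real (B0_w n l G0 w) * real ((n - w) choose (u - w))))"
    unfolding BU_def i0_def B0_w_def by (rule gen_bound[OF finite_dual0 beta])
  have g1: "X \<le> (\<Sum>e = d1 n k l G1 G0..n. \<alpha> ^ e * (1 - \<alpha>) ^ (n - e) *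
              (\<Sum>w = d1 n k l G1 G0..e. real (A_w n k l G1 G0 w) * real ((n - w) choose (e - w))))"
    unfolding X_def W_def i1_def A_w_def by (rule gen_bound[OF finite_code alpha])
  have part1: "P_fail n k l G1 G0 m \<beta> \<alpha> \<le>
           (\<Sum>u = d0 n l G0..n. \<beta> ^ u * (1 - \<beta>) ^ (n - u) *
              (\<Sum>w = d0 n l G0..u. real (B0_w n l G0 w) * real ((n - w) choose (u - w))))
         + (\<Sum>e = d1 n k l G1 G0..n. \<alpha> ^ e * (1 - \<alpha>) ^ (n - e) *
              (\<Sum>w = d1 n k l G1 G0..e. real (A_w n k l G1 G0 w) * real ((n - w) choose (e - w))))"
    using P1 g0 g1 by linarith
  show ?thesis
  proof (intro conjI impI part1)
    assume H: "(\<forall>w. d0 n l G0 \<le> w \<and> w \<le> n \<longrightarrow> real (B0_w n l G0 w) \<le> (1/2) ^ l * real (n choose w)) \<and>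
         (\<forall>w. d1 n k l G1 G0 \<le> w \<and> w \<le> n \<longrightarrow>
              real (A_w n k l G1 G0 w) \<le> (1/2) ^ (n - k - l) * real (n choose w))"
    have h0: "(\<Sum>u = d0 n l G0..n. \<beta> ^ u * (1 - \<beta>) ^ (n - u) *
              (\<Sum>w = d0 n l G0..u. real (B0_w n l G0 w) * real ((n - w) choose (u - w)))) \<le> (1/2) ^ l * (1 + \<beta>) ^ n"
      by (rule part2[OF beta]) (use H in auto)
    have h1: "(\<Sum>e = d1 n k l G1 G0..n. \<alpha> ^ e * (1 - \<alpha>) ^ (n - e) *
              (\<Sum>w = d1 n k l G1 G0..e. real (A_w n k l G1 G0 w) * real ((n - w) choose (e - w)))) \<le> (1/2) ^ (n - k - l) * (1 + \<alpha>) ^ n"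
      by (rule part2[OF alpha]) (use H in auto)
    show "P_fail n k l G1 G0 m \<beta> \<alpha> \<le> (1/2) ^ l * (1 + \<beta>) ^ n + (1/2) ^ (n - k - l) * (1 + \<alpha>) ^ n"
      using part1 h0 h1 by linarith
  qed
qed

end
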